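(* (Generalized Goursat lemma.) Let $G$ be a pseudosimple group, $k\ge 1$, and let $H\subseteq G^{[k]}$ be a subgroup that surjects onto each of the $k$ coordinate factors $G$. Then: (1) $H$ is isomorphic over $G^{\mathrm{ab}}$ to $G^{[w]}$ for some $w\le k$; (2) there are a surjection $f:\{1,\dots,k\}\to\{1,\dots,w\}$ and automorphisms $\varphi_1,\dots,\varphi_k$ of $G$ over $G^{\mathrm{ab}}$ such that $H$ is the image of $G^{[w]}$ under $(g_1,\dots,g_w)\mapsto(\varphi_1(g_{f(1)}),\dots,\varphi_k(g_{f(k)}))$.
   Context: $G'$ is the derived subgroup, $G^{\mathrm{ab}}=G/G'$. $G$ is pseudosimple if it is a finite centerless group, $G'$ is isomorphic to a power of a nonabelian simple group, and $G/N$ is abelian for every nontrivial normal subgroup $N$. $G^{[m]}=G\times_{G^{\mathrm{ab}}}\cdots\times_{G^{\mathrm{ab}}}G$ ($m$ factors) is the fiber power, mapping to $G^{\mathrm{ab}}$ via any coordinate; subgroups of it map to $G^{\mathrm{ab}}$ by restriction. For groups $G_1,G_2$ with homomorphisms $\pi_1,\pi_2$ to $Q$, an isomorphism over $Q$ is an isomorphism $i:G_1\to G_2$ with $\pi_2\circ i=\pi_1$; an automorphism of $G$ over $G^{\mathrm{ab}}$ is one inducing the identity on $G^{\mathrm{ab}}$. *)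

theory Defs
  imports "HOL-Algebra.Algebra"
begin

definition grp_center :: "('a, 'b) monoid_scheme \<Rightarrow> 'a set" where
  "grp_center G = {z \<in> carrier G. \<forall>x \<in> carrier G. z \<otimes>\<^bsub>G\<^esub> x = x \<otimes>\<^bsub>G\<^esub> z}"

text \<open>Derived subgroup G' and the abelianization map G -> G/G' (x maps to the coset G' x).\<close>
abbreviation commutator_sub :: "('a, 'b) monoid_scheme \<Rightarrow> 'a set" where
  "commutator_sub G \<equiv> derived G (carrier G)"

definition ab_map :: "('a, 'b) monoid_scheme \<Rightarrow> 'a \<Rightarrow> 'a set" where
  "ab_map G x = commutator_sub G #>\<^bsub>G\<^esub> x"

definition pseudosimple :: "('a, 'b) monoid_scheme \<Rightarrow> bool" where
  "pseudosimple G \<longleftrightarrow> group G \<and> finite (carrier G) \<and> grp_center G = {\<one>\<^bsub>G\<^esub>} \<and>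
     (\<exists>(S :: 'a monoid) (n :: nat). n \<ge> 1 \<and> simple_group S \<and> \<not> comm_group S \<and>
        G\<lparr>carrier := commutator_sub G\<rparr> \<cong> product_group {..<n} (\<lambda>_. S)) \<and>
     (\<forall>N. N \<lhd> G \<and> N \<noteq> {\<one>\<^bsub>G\<^esub>} \<longrightarrow> comm_group (G Mod N))"

text \<open>Fiber power G^[m] = G x_{G^ab} ... x_{G^ab} G, with coordinates indexed by {0..<m}.\<close>
definition fiber_power :: "('a, 'b) monoid_scheme \<Rightarrow> nat \<Rightarrow> (nat \<Rightarrow> 'a) monoid" where
  "fiber_power G m = (product_group {..<m} (\<lambda>_. G))
     \<lparr>carrier := {g \<in> (\<Pi>\<^sub>E i\<in>{..<m}. carrier G). \<forall>i<m. \<forall>j<m. ab_map G (g i) = ab_map G (g j)}\<rparr>"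

text \<open>Map of (a subset of) a fiber power to G^ab: via the first coordinate.\<close>
definition fp_ab :: "('a, 'b) monoid_scheme \<Rightarrow> (nat \<Rightarrow> 'a) \<Rightarrow> 'a set" where
  "fp_ab G g = ab_map G (g 0)"

definition aut_over_ab :: "('a, 'b) monoid_scheme \<Rightarrow> ('a \<Rightarrow> 'a) \<Rightarrow> bool" where
  "aut_over_ab G \<phi> \<longleftrightarrow> \<phi> \<in> iso G G \<and> (\<forall>x \<in> carrier G. ab_map G (\<phi> x) = ab_map G x)"

end

theory Submission imports Defs begin

locale psg = group G for G (structure) +
  assumes fin: "finite (carrier G)"
  and nonab: "\<exists>a\<in>derived G (carrier G). \<exists>b\<in>derived G (carrier G). a \<otimes> b \<noteq> b \<otimes> a"
  and minN: "\<And>N. N \<lhd> G \<Longrightarrow> N \<noteq> {\<one>} \<Longrightarrow> derived G (carrier G) \<subseteq> N"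
begin

abbreviation "D \<equiv> derived G (carrier G)"

lemma inv_cancel_left [simp]: "x \<in> carrier G \<Longrightarrow> y \<in> carrier G \<Longrightarrow> inv x \<otimes> (x \<otimes> y) = y"
  by (simp add: m_assoc[symmetric])
lemma inv_cancel_left2 [simp]: "x \<in> carrier G \<Longrightarrow> y \<in> carrier G \<Longrightarrow> x \<otimes> (inv x \<otimes> y) = y"
  by (simp add: m_assoc[symmetric])

lemma D_normal: "D \<lhd> G" by (rule derived_self_is_normal)
lemma D_sub: "subgroup D G" using D_normal normal_imp_subgroup by blast
lemma D_car: "x \<in> D \<Longrightarrow> x \<in> carrier G" using subgroup.subset[OF D_sub] by blast
lemma comm_D: "x \<in> carrier G \<Longrightarrow> y \<in> carrier G \<Longrightarrow> inv x \<otimes> inv y \<otimes> x \<otimes> y \<in> D"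
proof -
  assume x: "x \<in> carrier G" and y: "y \<in> carrier G"
  have "inv x \<otimes> inv y \<otimes> inv (inv x) \<otimes> inv (inv y) \<in> D"
    unfolding derived_def
    by (rule generate.incl, rule UN_I[of "inv x"], simp add: x, rule UN_I[of "inv y"], simp add: y, simp)
  thus ?thesis using x y by simp
qed

lemma ab_mult: "x \<in> carrier G \<Longrightarrow> y \<in> carrier G \<Longrightarrow> ab_map G (x \<otimes> y) = ab_map G x <#> ab_map G y"
  unfolding ab_map_def using normal.rcos_sum[OF D_normal] by simp

lemma ab_eq_iff: "x \<in> carrier G \<Longrightarrow> y \<in> carrier G \<Longrightarrow> ab_map G x = ab_map G y \<longleftrightarrow> x \<otimes> inv y \<in> D"
proof -
  assume x: "x \<in> carrier G" and y: "y \<in> carrier G"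
  show ?thesis
  proof
    assume "ab_map G x = ab_map G y"
    then have "x \<in> D #> y" unfolding ab_map_def using repr_independenceD[OF D_sub x] by simp
    then show "x \<otimes> inv y \<in> D" using subgroup.rcos_module_imp[OF D_sub is_group y] by blast
  next
    assume "x \<otimes> inv y \<in> D"
    then have "x \<in> D #> y" using subgroup.rcos_module_rev[OF D_sub is_group y x] by blast
    then show "ab_map G x = ab_map G y" unfolding ab_map_def using repr_independence[OF _ y D_sub] by simp
  qed
qed

lemma ab_eq_iff2: "x \<in> carrier G \<Longrightarrow> y \<in> carrier G \<Longrightarrow> ab_map G x = ab_map G y \<longleftrightarrow> inv x \<otimes> y \<in> D"
proof -
  assume x: "x \<in> carrier G" and y: "y \<in> carrier G"
  have "inv x \<otimes> y \<in> D \<longleftrightarrow> y \<otimes> (inv x \<otimes> y) \<otimes> inv y \<in> D"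
  proof
    assume "inv x \<otimes> y \<in> D" then show "y \<otimes> (inv x \<otimes> y) \<otimes> inv y \<in> D"
      using normal_invE(2)[OF D_normal] x y by simp
  next
    assume a: "y \<otimes> (inv x \<otimes> y) \<otimes> inv y \<in> D"
    have "inv y \<otimes> (y \<otimes> (inv x \<otimes> y) \<otimes> inv y) \<otimes> inv (inv y) \<in> D"
      using normal_invE(2)[OF D_normal, OF _ a, of "inv y"] y by simp
    also have "inv y \<otimes> (y \<otimes> (inv x \<otimes> y) \<otimes> inv y) \<otimes> inv (inv y) = inv x \<otimes> y"
      using x y by (simp add: m_assoc)
    finally show "inv x \<otimes> y \<in> D" .
  qed
  also have "y \<otimes> (inv x \<otimes> y) \<otimes> inv y = y \<otimes> inv x" using x y by (simp add: m_assoc)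
  also have "y \<otimes> inv x \<in> D \<longleftrightarrow> ab_map G y = ab_map G x" using ab_eq_iff x y by simp
  finally show ?thesis by auto
qed

lemma ab_D: "x \<in> carrier G \<Longrightarrow> ab_map G x = ab_map G \<one> \<longleftrightarrow> x \<in> D"
  using ab_eq_iff by simp

definition FP :: "nat \<Rightarrow> (nat \<Rightarrow> 'a) set" where
  "FP m = {g \<in> (\<Pi>\<^sub>E i\<in>{..<m}. carrier G). \<forall>i<m. \<forall>j<m. ab_map G (g i) = ab_map G (g j)}"

lemma FP_car: "g \<in> FP m \<Longrightarrow> i < m \<Longrightarrow> g i \<in> carrier G"
  unfolding FP_def by (simp add: PiE_iff)
lemma FP_ext: "g \<in> FP m \<Longrightarrow> g \<in> extensional {..<m}"
  unfolding FP_def by (simp add: PiE_iff)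
lemma FP_ab: "g \<in> FP m \<Longrightarrow> i < m \<Longrightarrow> j < m \<Longrightarrow> ab_map G (g i) = ab_map G (g j)"
  unfolding FP_def mem_Collect_eq by (elim conjE allE impE)
lemma FP_I: "(\<And>i. i < m \<Longrightarrow> g i \<in> carrier G) \<Longrightarrow> g \<in> extensional {..<m} \<Longrightarrow>
   (\<And>i j. i < m \<Longrightarrow> j < m \<Longrightarrow> ab_map G (g i) = ab_map G (g j)) \<Longrightarrow> g \<in> FP m"
  unfolding FP_def mem_Collect_eq PiE_iff by (intro conjI allI impI ballI; (erule lessThan_iff[THEN iffD1, THEN meta_mp])?; blast?)

lemma FP_mul: "x \<in> FP m \<Longrightarrow> y \<in> FP m \<Longrightarrow> (\<lambda>i\<in>{..<m}. x i \<otimes> y i) \<in> FP m"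
proof (rule FP_I)
  fix i j assume x: "x \<in> FP m" and y: "y \<in> FP m" and ij: "i < m" "j < m"
  have "ab_map G (x i \<otimes> y i) = ab_map G (x i) <#> ab_map G (y i)" using x y ij by (simp add: ab_mult FP_car)
  also have "\<dots> = ab_map G (x j) <#> ab_map G (y j)" by (simp only: FP_ab[OF x ij] FP_ab[OF y ij])
  also have "\<dots> = ab_map G (x j \<otimes> y j)" using x y ij by (simp add: ab_mult FP_car)
  finally show "ab_map G ((\<lambda>i\<in>{..<m}. x i \<otimes> y i) i) = ab_map G ((\<lambda>i\<in>{..<m}. x i \<otimes> y i) j)"
    using ij by simp
qed (auto simp: FP_car)

lemma FP_one: "(\<lambda>i\<in>{..<m}. \<one>) \<in> FP m"
  by (rule FP_I) auto

lemma FP_inv: "x \<in> FP m \<Longrightarrow> (\<lambda>i\<in>{..<m}. inv (x i)) \<in> FP m"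
proof (rule FP_I)
  fix i j assume x: "x \<in> FP m" and ij: "i < m" "j < m"
  have c: "x i \<in> carrier G" "x j \<in> carrier G" using x ij FP_car by auto
  have "x i \<otimes> inv (x j) \<in> D" using ab_eq_iff[OF c] FP_ab[OF x ij] by simp
  then have "ab_map G (inv (x i)) = ab_map G (inv (x j))" using ab_eq_iff2[of "inv (x i)" "inv (x j)"] c by simp
  then show "ab_map G ((\<lambda>i\<in>{..<m}. inv (x i)) i) = ab_map G ((\<lambda>i\<in>{..<m}. inv (x i)) j)"
    using ij by simp
qed (auto simp: FP_car)

lemma FP_D: "(\<And>i. i < m \<Longrightarrow> g i \<in> D) \<Longrightarrow> g \<in> extensional {..<m} \<Longrightarrow> g \<in> FP m"
proof (rule FP_I)
  fix i j assume g: "\<And>i. i < m \<Longrightarrow> g i \<in> D" and ij: "i < m" "j < m"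
  have "ab_map G (g i) = ab_map G \<one>" using ab_D D_car g ij by blast
  moreover have "ab_map G (g j) = ab_map G \<one>" using ab_D D_car g ij by blast
  ultimately show "ab_map G (g i) = ab_map G (g j)" by simp
qed (auto simp: D_car)

lemma FP_diag: "x \<in> carrier G \<Longrightarrow> (\<lambda>i\<in>{..<m}. x) \<in> FP m"
  by (rule FP_I) auto


lemma hom_factor:
  assumes w: "1 \<le> w"
  and psi_car: "\<And>g. g \<in> FP w \<Longrightarrow> \<psi> g \<in> carrier G"
  and psi_mul: "\<And>a b. a \<in> FP w \<Longrightarrow> b \<in> FP w \<Longrightarrow> \<psi> (\<lambda>i\<in>{..<w}. a i \<otimes> b i) = \<psi> a \<otimes> \<psi> b"
  and psi_surj: "carrier G \<subseteq> \<psi> ` FP w"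
  and psi_ab: "\<And>g. g \<in> FP w \<Longrightarrow> ab_map G (\<psi> g) = ab_map G (g 0)"
  shows "\<exists>j<w. \<exists>\<sigma>. aut_over_ab G \<sigma> \<and> (\<forall>g\<in>FP w. \<psi> g = \<sigma> (g j))"
proof -
  define one where "one = (\<lambda>i\<in>{..<w}. \<one>)"
  have one_FP: "one \<in> FP w" using FP_one by (simp add: one_def)
  have psi_one: "\<psi> one = \<one>"
  proof -
    have "(\<lambda>i\<in>{..<w}. one i \<otimes> one i) = one" unfolding one_def by (rule restrict_ext) simp
    then have "\<psi> one = \<psi> one \<otimes> \<psi> one" using psi_mul[OF one_FP one_FP] by simp
    then show ?thesis using psi_car[OF one_FP] by simp
  qed
  have psi_inv: "\<psi> (\<lambda>i\<in>{..<w}. inv (g i)) = inv (\<psi> g)" if g: "g \<in> FP w" for g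
  proof -
    have gi: "(\<lambda>i\<in>{..<w}. inv (g i)) \<in> FP w" using FP_inv[OF g] .
    have "(\<lambda>i\<in>{..<w}. g i \<otimes> (\<lambda>i\<in>{..<w}. inv (g i)) i) = one"
      unfolding one_def by (rule restrict_ext) (simp add: FP_car[OF g])
    then have "\<psi> g \<otimes> \<psi> (\<lambda>i\<in>{..<w}. inv (g i)) = \<one>" using psi_mul[OF g gi] psi_one by simp
    then show ?thesis using inv_equality[OF inv_comm] psi_car[OF g] psi_car[OF gi] by metis
  qed
  define E where "E j x = (\<lambda>i\<in>{..<w}. if i = j then x else \<one>)" for j x
  have one_D: "\<one> \<in> D" using subgroup.one_closed[OF D_sub] .
  have E_FP: "E j x \<in> FP w" if "x \<in> D" for j x
    unfolding E_def by (rule FP_D) (use that one_D in auto)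
  have E_one: "E j \<one> = one" for j by (simp add: E_def one_def)
  have E_mul: "(\<lambda>i\<in>{..<w}. E j x i \<otimes> E j y i) = E j (x \<otimes> y)" if "x \<in> carrier G" "y \<in> carrier G" for j x y
    unfolding E_def by (rule restrict_ext) (simp add: that)
  have kill: "\<psi> g = \<one>"
    if hyp: "\<forall>i<w. i \<noteq> j0 \<longrightarrow> (\<forall>x\<in>D. \<psi> (E i x) = \<one>)"
    and "n \<le> w" "g \<in> extensional {..<w}" "\<forall>i<w. g i \<in> D" "\<forall>i<w. (n \<le> i \<or> i = j0) \<longrightarrow> g i = \<one>"
    for j0 n g
    using that(2-)
  proof (induction n arbitrary: g)
    case 0
    have "g = one" unfolding one_def
    proof (rule extensionalityI[OF 0(2)])
      show "(\<lambda>i\<in>{..<w}. \<one>) \<in> extensional {..<w}" by simp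
      fix i assume "i \<in> {..<w}" then show "g i = (\<lambda>i\<in>{..<w}. \<one>) i" using 0(4) by simp
    qed
    then show ?case using psi_one by simp
  next
    case (Suc n)
    define g' where "g' = (\<lambda>i\<in>{..<w}. if i = n then \<one> else g i)"
    have nw: "n < w" using Suc(2) by simp
    have gn: "g n \<in> D" using Suc(4) nw by simp
    have g'D: "\<forall>i<w. g' i \<in> D" using Suc(4) one_D by (simp add: g'_def)
    have g'FP: "g' \<in> FP w" by (rule FP_D) (use g'D in \<open>auto simp: g'_def\<close>)
    have g'e: "g' \<in> extensional {..<w}" by (simp add: g'_def)
    have "\<psi> g' = \<one>"
      by (rule Suc.IH[OF _ g'e g'D]) (use Suc(2-5) one_D in \<open>auto simp: g'_def\<close>)
    moreover have "\<psi> (E n (g n)) = \<one>"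
    proof (cases "n = j0")
      case True
      then have "g n = \<one>" using Suc(5) nw by blast
      then show ?thesis using E_one psi_one by simp
    next
      case False then show ?thesis using hyp nw gn by blast
    qed
    moreover have "g = (\<lambda>i\<in>{..<w}. g' i \<otimes> E n (g n) i)"
    proof (rule extensionalityI[OF Suc(3)])
      show "(\<lambda>i\<in>{..<w}. g' i \<otimes> E n (g n) i) \<in> extensional {..<w}" by simp
      fix i assume i: "i \<in> {..<w}"
      then have "g i \<in> carrier G" using Suc(4) D_car by simp
      then show "g i = (\<lambda>i\<in>{..<w}. g' i \<otimes> E n (g n) i) i"
        using i gn D_car by (simp add: g'_def E_def)
    qed
    ultimately show ?case using psi_mul[OF g'FP E_FP[OF gn]] by (metis one_closed l_one)
  qed
  have ex_nt: "\<exists>j<w. \<exists>x\<in>D. \<psi> (E j x) \<noteq> \<one>"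
  proof (rule ccontr)
    assume "\<not> ?thesis"
    then have hyp: "\<forall>i<w. i \<noteq> w \<longrightarrow> (\<forall>x\<in>D. \<psi> (E i x) = \<one>)" by blast
    have comm: "a \<otimes> b = b \<otimes> a" if a: "a \<in> carrier G" and b: "b \<in> carrier G" for a b
    proof -
      obtain ga where ga: "ga \<in> FP w" "a = \<psi> ga" using psi_surj a by blast
      obtain gb where gb: "gb \<in> FP w" "b = \<psi> gb" using psi_surj b by blast
      define p where "p = (\<lambda>i\<in>{..<w}. ga i \<otimes> gb i)"
      define q where "q = (\<lambda>i\<in>{..<w}. gb i \<otimes> ga i)"
      define d where "d = (\<lambda>i\<in>{..<w}. inv (ga i) \<otimes> inv (gb i) \<otimes> ga i \<otimes> gb i)"
      have cg: "ga i \<in> carrier G" "gb i \<in> carrier G" if "i < w" for i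
        using FP_car ga gb that by auto
      have dD: "\<forall>i<w. d i \<in> D" using comm_D cg by (simp add: d_def)
      have dFP: "d \<in> FP w" by (rule FP_D) (use dD in \<open>auto simp: d_def\<close>)
      have qFP: "q \<in> FP w" unfolding q_def using FP_mul[OF gb(1) ga(1)] .
      have "\<psi> d = \<one>" by (rule kill[OF hyp order_refl]) (use dD in \<open>auto simp: d_def\<close>)
      have "p = (\<lambda>i\<in>{..<w}. q i \<otimes> d i)"
        unfolding p_def q_def d_def by (rule restrict_ext) (simp add: cg m_assoc)
      then have "\<psi> p = \<psi> q \<otimes> \<psi> d" using psi_mul[OF qFP dFP] by simp
      then have "\<psi> p = \<psi> q" using \<open>\<psi> d = \<one>\<close> psi_car[OF qFP] by simp
      then show ?thesis using psi_mul[OF ga(1) gb(1)] psi_mul[OF gb(1) ga(1)] ga gb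
        unfolding p_def q_def by simp
    qed
    then show False using nonab D_car by blast
  qed
  have bigM: "D \<subseteq> \<psi> ` E j ` D" if j: "j < w" and x0: "x0 \<in> D" "\<psi> (E j x0) \<noteq> \<one>" for j x0
  proof (rule minN)
    show "\<psi> ` E j ` D \<noteq> {\<one>}" using x0 by blast
    show "\<psi> ` E j ` D \<lhd> G"
    proof (rule normal_invI)
      show "subgroup (\<psi> ` E j ` D) G"
      proof
        show "\<psi> ` E j ` D \<subseteq> carrier G" using psi_car E_FP by blast
        show "\<one> \<in> \<psi> ` E j ` D" using imageI[OF one_D, of "E j"] E_one psi_one by (metis imageI)
      next
        fix a b assume "a \<in> \<psi> ` E j ` D" "b \<in> \<psi> ` E j ` D"
        then obtain x y where xy: "x \<in> D" "y \<in> D" "a = \<psi> (E j x)" "b = \<psi> (E j y)" by blast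
        have "a \<otimes> b = \<psi> (E j (x \<otimes> y))"
          using psi_mul[OF E_FP[OF xy(1), of j] E_FP[OF xy(2), of j]] E_mul[OF D_car[OF xy(1)] D_car[OF xy(2)], of j] xy by simp
        then show "a \<otimes> b \<in> \<psi> ` E j ` D" using subgroup.m_closed[OF D_sub xy(1,2)] by blast
      next
        fix a assume "a \<in> \<psi> ` E j ` D"
        then obtain x where x: "x \<in> D" "a = \<psi> (E j x)" by blast
        have "(\<lambda>i\<in>{..<w}. inv (E j x i)) = E j (inv x)"
          unfolding E_def by (rule restrict_ext) simp
        then have "inv a = \<psi> (E j (inv x))" using psi_inv[OF E_FP[OF x(1), of j]] x by simp
        then show "inv a \<in> \<psi> ` E j ` D" using subgroup.m_inv_closed[OF D_sub x(1)] by blast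
      qed
    next
      fix a h assume a: "a \<in> carrier G" and h: "h \<in> \<psi> ` E j ` D"
      then obtain x where x: "x \<in> D" "h = \<psi> (E j x)" by blast
      obtain g where g: "g \<in> FP w" "a = \<psi> g" using psi_surj a by blast
      have cg: "g i \<in> carrier G" if "i < w" for i using FP_car g that by auto
      have xc: "x \<in> carrier G" using D_car x by simp
      define gi where "gi = (\<lambda>i\<in>{..<w}. inv (g i))"
      have giFP: "gi \<in> FP w" unfolding gi_def using FP_inv[OF g(1)] .
      define p where "p = (\<lambda>i\<in>{..<w}. g i \<otimes> E j x i)"
      have pFP: "p \<in> FP w" unfolding p_def using FP_mul[OF g(1) E_FP[OF x(1), of j]] .
      have conjD: "g j \<otimes> x \<otimes> inv (g j) \<in> D" using normal_invE(2)[OF D_normal cg[OF j] x(1)] .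
      have "(\<lambda>i\<in>{..<w}. p i \<otimes> gi i) = E j (g j \<otimes> x \<otimes> inv (g j))"
        unfolding p_def gi_def E_def by (rule restrict_ext) (simp add: cg xc)
      moreover have "\<psi> (\<lambda>i\<in>{..<w}. p i \<otimes> gi i) = a \<otimes> h \<otimes> inv a"
      proof -
        have 1: "\<psi> p = a \<otimes> h" unfolding p_def using psi_mul[OF g(1) E_FP[OF x(1), of j]] g(2) x(2) by simp
        have 2: "\<psi> gi = inv a" unfolding gi_def using psi_inv[OF g(1)] g(2) by simp
        show ?thesis using psi_mul[OF pFP giFP] 1 2 by simp
      qed
      ultimately have "a \<otimes> h \<otimes> inv a = \<psi> (E j (g j \<otimes> x \<otimes> inv (g j)))" by simp
      then show "a \<otimes> h \<otimes> inv a \<in> \<psi> ` E j ` D" using imageI[OF conjD, of "E j"] by simp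
    qed
  qed
  obtain j x0 where j: "j < w" and x0: "x0 \<in> D" "\<psi> (E j x0) \<noteq> \<one>" using ex_nt by blast
  have Mj: "D \<subseteq> \<psi> ` E j ` D" using bigM[OF j x0] .
  have others: "\<forall>i<w. i \<noteq> j \<longrightarrow> (\<forall>y\<in>D. \<psi> (E i y) = \<one>)"
  proof (rule ccontr)
    assume "\<not> ?thesis"
    then obtain i y where i: "i < w" "i \<noteq> j" and y: "y \<in> D" "\<psi> (E i y) \<noteq> \<one>" by blast
    have Mi: "D \<subseteq> \<psi> ` E i ` D" using bigM[OF i(1) y] .
    have "a \<otimes> b = b \<otimes> a" if a: "a \<in> D" and b: "b \<in> D" for a b
    proof -
      obtain u where u: "u \<in> D" "a = \<psi> (E j u)" using Mj a by blast
      obtain v where v: "v \<in> D" "b = \<psi> (E i v)" using Mi b by blast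
      have "(\<lambda>c\<in>{..<w}. E j u c \<otimes> E i v c) = (\<lambda>c\<in>{..<w}. E i v c \<otimes> E j u c)"
        unfolding E_def by (rule restrict_ext) (use i u v D_car in simp)
      then show ?thesis using psi_mul[OF E_FP[OF u(1), of j] E_FP[OF v(1), of i]]
        psi_mul[OF E_FP[OF v(1), of i] E_FP[OF u(1), of j]] u(2) v(2) by simp
    qed
    then show False using nonab by blast
  qed
  define \<sigma> where "\<sigma> x = \<psi> (\<lambda>i\<in>{..<w}. x)" for x
  have diag: "(\<lambda>i\<in>{..<w}. x) \<in> FP w" if "x \<in> carrier G" for x using FP_diag[OF that] .
  have fac: "\<psi> g = \<sigma> (g j)" if g: "g \<in> FP w" for g
  proof -
    have cg: "g i \<in> carrier G" if "i < w" for i using FP_car g that by auto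
    define d where "d = (\<lambda>i\<in>{..<w}. inv (g j) \<otimes> g i)"
    have dD: "\<forall>i<w. d i \<in> D"
    proof (intro allI impI)
      fix i assume "i < w"
      then show "d i \<in> D" using ab_eq_iff2[OF cg[OF j] cg[OF \<open>i<w\<close>]] FP_ab[OF g j \<open>i<w\<close>]
        by (simp add: d_def)
    qed
    have dFP: "d \<in> FP w" by (rule FP_D) (use dD in \<open>auto simp: d_def\<close>)
    have "\<psi> d = \<one>"
      by (rule kill[OF others order_refl]) (use dD cg j in \<open>auto simp: d_def\<close>)
    have "g = (\<lambda>i\<in>{..<w}. (\<lambda>i\<in>{..<w}. g j) i \<otimes> d i)"
    proof (rule extensionalityI[OF FP_ext[OF g]])
      show "(\<lambda>i\<in>{..<w}. (\<lambda>i\<in>{..<w}. g j) i \<otimes> d i) \<in> extensional {..<w}" by simp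
      fix i assume "i \<in> {..<w}" then show "g i = (\<lambda>i\<in>{..<w}. (\<lambda>i\<in>{..<w}. g j) i \<otimes> d i) i"
        using cg j by (simp add: d_def)
    qed
    then have "\<psi> g = \<sigma> (g j) \<otimes> \<psi> d" using psi_mul[OF diag[OF cg[OF j]] dFP] unfolding \<sigma>_def by metis
    then show ?thesis using \<open>\<psi> d = \<one>\<close> psi_car[OF diag[OF cg[OF j]]] unfolding \<sigma>_def by simp
  qed
  have sig_car: "\<sigma> x \<in> carrier G" if "x \<in> carrier G" for x
    unfolding \<sigma>_def using psi_car[OF diag[OF that]] .
  have sig_hom: "\<sigma> \<in> hom G G"
  proof (rule homI)
    show "\<sigma> x \<in> carrier G" if "x \<in> carrier G" for x using sig_car[OF that] .
    fix x y assume x: "x \<in> carrier G" and y: "y \<in> carrier G"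
    have "(\<lambda>i\<in>{..<w}. (\<lambda>i\<in>{..<w}. x) i \<otimes> (\<lambda>i\<in>{..<w}. y) i) = (\<lambda>i\<in>{..<w}. x \<otimes> y)"
      by (rule restrict_ext) simp
    then show "\<sigma> (x \<otimes> y) = \<sigma> x \<otimes> \<sigma> y" unfolding \<sigma>_def using psi_mul[OF diag[OF x] diag[OF y]] by simp
  qed
  have sig_surj: "\<sigma> ` carrier G = carrier G"
  proof
    show "\<sigma> ` carrier G \<subseteq> carrier G" using sig_car by blast
    show "carrier G \<subseteq> \<sigma> ` carrier G"
    proof
      fix y assume "y \<in> carrier G"
      then obtain g where g: "g \<in> FP w" "y = \<psi> g" using psi_surj by blast
      then have "y = \<sigma> (g j)" using fac by simp
      moreover have "g j \<in> carrier G" using FP_car g j by simp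
      ultimately show "y \<in> \<sigma> ` carrier G" by blast
    qed
  qed
  have sig_inj: "inj_on \<sigma> (carrier G)"
    using eq_card_imp_inj_on[OF fin, of \<sigma>] sig_surj by simp
  have "aut_over_ab G \<sigma>"
    unfolding aut_over_ab_def
  proof
    show "\<sigma> \<in> iso G G" using sig_hom sig_surj sig_inj by (simp add: iso_iff)
    show "\<forall>x\<in>carrier G. ab_map G (\<sigma> x) = ab_map G x"
      using psi_ab[OF diag] w unfolding \<sigma>_def by simp
  qed
  then show ?thesis using fac j by blast
qed


definition sg :: "nat \<Rightarrow> (nat \<Rightarrow> 'a) set \<Rightarrow> bool" where
  "sg m H \<longleftrightarrow> H \<subseteq> FP m \<and> (\<lambda>i\<in>{..<m}. \<one>) \<in> H \<and> (\<forall>x\<in>H. \<forall>y\<in>H. (\<lambda>i\<in>{..<m}. x i \<otimes> y i) \<in> H)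
     \<and> (\<forall>x\<in>H. (\<lambda>i\<in>{..<m}. inv (x i)) \<in> H)"

lemma aut_car: "aut_over_ab G \<phi> \<Longrightarrow> x \<in> carrier G \<Longrightarrow> \<phi> x \<in> carrier G"
  unfolding aut_over_ab_def iso_def hom_def by blast
lemma aut_mult: "aut_over_ab G \<phi> \<Longrightarrow> x \<in> carrier G \<Longrightarrow> y \<in> carrier G \<Longrightarrow> \<phi> (x \<otimes> y) = \<phi> x \<otimes> \<phi> y"
  unfolding aut_over_ab_def iso_def hom_def by blast
lemma aut_ab: "aut_over_ab G \<phi> \<Longrightarrow> x \<in> carrier G \<Longrightarrow> ab_map G (\<phi> x) = ab_map G x"
  unfolding aut_over_ab_def by blast
lemma aut_id: "aut_over_ab G (\<lambda>x. x)"
  unfolding aut_over_ab_def using iso_set_refl by blast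

lemma Phi_FP:
  assumes f: "f \<in> {..<K} \<rightarrow> {..<w}" and \<phi>: "\<forall>i<K. aut_over_ab G (\<phi> i)" and g: "g \<in> FP w"
  shows "(\<lambda>i\<in>{..<K}. \<phi> i (g (f i))) \<in> FP K"
proof (rule FP_I)
  have fi: "f i < w" if "i < K" for i using f that by auto
  show "(\<lambda>i\<in>{..<K}. \<phi> i (g (f i))) i \<in> carrier G" if "i < K" for i
    using aut_car[OF \<phi>[rule_format, OF that] FP_car[OF g fi[OF that]]] that by simp
  show "(\<lambda>i\<in>{..<K}. \<phi> i (g (f i))) \<in> extensional {..<K}" by simp
  fix i j assume ij: "i < K" "j < K"
  have "ab_map G (\<phi> i (g (f i))) = ab_map G (g (f i))"
    using aut_ab[OF \<phi>[rule_format, OF ij(1)] FP_car[OF g fi[OF ij(1)]]] .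
  also have "\<dots> = ab_map G (g (f j))" using FP_ab[OF g fi[OF ij(1)] fi[OF ij(2)]] .
  also have "\<dots> = ab_map G (\<phi> j (g (f j)))"
    using aut_ab[OF \<phi>[rule_format, OF ij(2)] FP_car[OF g fi[OF ij(2)]]] by simp
  finally show "ab_map G ((\<lambda>i\<in>{..<K}. \<phi> i (g (f i))) i) = ab_map G ((\<lambda>i\<in>{..<K}. \<phi> i (g (f i))) j)"
    using ij by simp
qed

lemma base:
  assumes "sg (Suc 0) H" and "\<forall>i<Suc 0. (\<lambda>h. h i) ` H = carrier G"
  shows "\<exists>w f \<phi>. f \<in> {..<Suc 0} \<rightarrow> {..<w} \<and> f ` {..<Suc 0} = {..<w} \<and> (\<forall>i<Suc 0. aut_over_ab G (\<phi> i))
     \<and> H = (\<lambda>g. \<lambda>i\<in>{..<Suc 0::nat}. \<phi> i (g (f i))) ` FP w"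
proof (intro exI conjI)
  show "(\<lambda>i. i) \<in> {..<Suc 0::nat} \<rightarrow> {..<Suc 0}" by simp
  show "(\<lambda>i. i) ` {..<Suc 0::nat} = {..<Suc 0}" by simp
  show "\<forall>i<Suc 0. aut_over_ab G ((\<lambda>_ x. x) i)" using aut_id by simp
  have HF: "H \<subseteq> FP (Suc 0)" using assms(1) unfolding sg_def by blast
  have "H = FP (Suc 0)"
  proof
    show "H \<subseteq> FP (Suc 0)" by (rule HF)
    show "FP (Suc 0) \<subseteq> H"
    proof
      fix g assume g: "g \<in> FP (Suc 0)"
      have "g 0 \<in> carrier G" using FP_car[OF g] by simp
      then obtain h where h: "h \<in> H" "h 0 = g 0" using assms(2) by force
      have "h = g"
      proof (rule extensionalityI[OF FP_ext FP_ext[OF g]])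
        show "h \<in> FP (Suc 0)" using h HF by blast
        fix i assume "i \<in> {..<Suc 0::nat}" then show "h i = g i" using h by simp
      qed
      then show "g \<in> H" using h by simp
    qed
  qed
  moreover have "(\<lambda>g. \<lambda>i\<in>{..<Suc 0::nat}. (\<lambda>_ x. x) i (g ((\<lambda>i. i) i))) ` FP (Suc 0) = FP (Suc 0)"
  proof -
    have "(\<lambda>i\<in>{..<Suc 0::nat}. g i) = g" if "g \<in> FP (Suc 0)" for g
      using FP_ext[OF that] by (simp add: extensional_restrict)
    then show ?thesis by (simp add: image_def)
  qed
  ultimately show "H = (\<lambda>g. \<lambda>i\<in>{..<Suc 0::nat}. (\<lambda>_ x. x) i (g ((\<lambda>i. i) i))) ` FP (Suc 0)" by simp
qed


context
  fixes H :: "(nat \<Rightarrow> 'a) set" and k w' :: nat and f' :: "nat \<Rightarrow> nat" and \<phi>' :: "nat \<Rightarrow> 'a \<Rightarrow> 'a"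
  assumes k1: "1 \<le> k" and sgH: "sg (Suc k) H" and surjH: "\<forall>i<Suc k. (\<lambda>h. h i) ` H = carrier G"
  and f'1: "f' \<in> {..<k} \<rightarrow> {..<w'}" and f'2: "f' ` {..<k} = {..<w'}" and aut': "\<forall>i<k. aut_over_ab G (\<phi>' i)"
  and IH: "(\<lambda>h. restrict h {..<k}) ` H = (\<lambda>g. \<lambda>i\<in>{..<k}. \<phi>' i (g (f' i))) ` FP w'"
begin

lemma HF: "H \<subseteq> FP (Suc k)" using sgH unfolding sg_def by blast
lemma H_one: "(\<lambda>i\<in>{..<Suc k}. \<one>) \<in> H" using sgH unfolding sg_def by blast
lemma H_mul: "x \<in> H \<Longrightarrow> y \<in> H \<Longrightarrow> (\<lambda>i\<in>{..<Suc k}. x i \<otimes> y i) \<in> H" using sgH unfolding sg_def by blast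
lemma H_inv: "x \<in> H \<Longrightarrow> (\<lambda>i\<in>{..<Suc k}. inv (x i)) \<in> H" using sgH unfolding sg_def by blast
lemma H_car: "h \<in> H \<Longrightarrow> i \<le> k \<Longrightarrow> h i \<in> carrier G" using HF FP_car by (meson less_Suc_eq_le subsetD)
lemma H_ext: "h \<in> H \<Longrightarrow> h \<in> extensional {..<Suc k}" using HF FP_ext by blast
lemma H_ab: "h \<in> H \<Longrightarrow> i \<le> k \<Longrightarrow> j \<le> k \<Longrightarrow> ab_map G (h i) = ab_map G (h j)"
  using HF FP_ab by (meson less_Suc_eq_le subsetD)
lemma f'lt: "i < k \<Longrightarrow> f' i < w'" using f'1 by auto
lemma w'pos: "0 < w'" using f'lt[of 0] k1 by simp
lemma aut'i: "i < k \<Longrightarrow> aut_over_ab G (\<phi>' i)" using aut' by simp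

lemma IH_elem: "h \<in> H \<Longrightarrow> \<exists>g\<in>FP w'. \<forall>i<k. h i = \<phi>' i (g (f' i))"
proof -
  assume h: "h \<in> H"
  have "restrict h {..<k} \<in> (\<lambda>g. \<lambda>i\<in>{..<k}. \<phi>' i (g (f' i))) ` FP w'"
    using imageI[OF h, of "\<lambda>h. restrict h {..<k}"] unfolding IH by simp
  then obtain g where g: "g \<in> FP w'" "restrict h {..<k} = (\<lambda>i\<in>{..<k}. \<phi>' i (g (f' i)))" by (rule imageE)
  have "h i = \<phi>' i (g (f' i))" if "i < k" for i using fun_cong[OF g(2), of i] that by simp
  then show ?thesis using g(1) by blast
qed

lemma IH_elem2: "g \<in> FP w' \<Longrightarrow> \<exists>h\<in>H. \<forall>i<k. h i = \<phi>' i (g (f' i))"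
proof -
  assume g: "g \<in> FP w'"
  have "(\<lambda>i\<in>{..<k}. \<phi>' i (g (f' i))) \<in> (\<lambda>h. restrict h {..<k}) ` H"
    unfolding IH using g by (rule imageI)
  then obtain h where h: "h \<in> H" "(\<lambda>i\<in>{..<k}. \<phi>' i (g (f' i))) = restrict h {..<k}" by (rule imageE)
  have "h i = \<phi>' i (g (f' i))" if "i < k" for i using fun_cong[OF h(2), of i] that by simp
  then show ?thesis using h(1) by blast
qed

lemma ab_link: "h \<in> H \<Longrightarrow> g \<in> FP w' \<Longrightarrow> \<forall>i<k. h i = \<phi>' i (g (f' i)) \<Longrightarrow> j < w' \<Longrightarrow> ab_map G (g j) = ab_map G (h k)"
proof -
  assume h: "h \<in> H" and g: "g \<in> FP w'" and hg: "\<forall>i<k. h i = \<phi>' i (g (f' i))" and j: "j < w'"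
  have k0: "0 < k" using k1 by simp
  have "ab_map G (g j) = ab_map G (g (f' 0))" using FP_ab[OF g j f'lt[OF k0]] .
  also have "\<dots> = ab_map G (\<phi>' 0 (g (f' 0)))" using aut_ab[OF aut'i[OF k0] FP_car[OF g f'lt[OF k0]]] by simp
  also have "\<dots> = ab_map G (h 0)" using hg k0 by simp
  also have "\<dots> = ab_map G (h k)" using H_ab[OF h] by simp
  finally show ?thesis .
qed

definition e :: "'a \<Rightarrow> nat \<Rightarrow> 'a" where "e x = (\<lambda>i\<in>{..<Suc k}. if i = k then x else \<one>)"


lemma e_ext: "e x \<in> extensional {..<Suc k}" by (simp add: e_def)
lemma e_mul: "x \<in> carrier G \<Longrightarrow> y \<in> carrier G \<Longrightarrow> (\<lambda>i\<in>{..<Suc k}. e x i \<otimes> e y i) = e (x \<otimes> y)"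
  unfolding e_def by (rule restrict_ext) simp
lemma e_one: "e \<one> = (\<lambda>i\<in>{..<Suc k}. \<one>)"
  unfolding e_def by (rule restrict_ext) simp
lemma e_inv: "x \<in> carrier G \<Longrightarrow> (\<lambda>i\<in>{..<Suc k}. inv (e x i)) = e (inv x)"
  unfolding e_def by (rule restrict_ext) simp

abbreviation "goal w f \<phi> \<equiv> f \<in> {..<Suc k} \<rightarrow> {..<w} \<and> f ` {..<Suc k} = {..<w} \<and> (\<forall>i<Suc k. aut_over_ab G (\<phi> i))
     \<and> H = (\<lambda>g. \<lambda>i\<in>{..<Suc k}. \<phi> i (g (f i))) ` FP w"

lemma stepA:
  assumes nt: "\<exists>x\<in>carrier G. x \<noteq> \<one> \<and> e x \<in> H"
  shows "\<exists>w f \<phi>. goal w f \<phi>"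
proof -
  define N where "N = {x \<in> carrier G. e x \<in> H}"
  have kk: "k < Suc k" by simp
  have Nsub: "subgroup N G"
  proof
    show "N \<subseteq> carrier G" unfolding N_def by blast
    show "\<one> \<in> N" unfolding N_def using e_one H_one by simp
  next
    fix x y assume "x \<in> N" "y \<in> N"
    then show "x \<otimes> y \<in> N" unfolding N_def using H_mul[of "e x" "e y"] e_mul by simp
  next
    fix x assume "x \<in> N"
    then show "inv x \<in> N" unfolding N_def using H_inv[of "e x"] e_inv by simp
  qed
  have "N \<lhd> G"
  proof (rule normal_invI[OF Nsub])
    fix a x assume a: "a \<in> carrier G" and x: "x \<in> N"
    have "a \<in> (\<lambda>h. h k) ` H" using surjH a kk by simp
    then obtain h where h: "h \<in> H" "h k = a" by (metis imageE)
    have xc: "x \<in> carrier G" and ex: "e x \<in> H" using x unfolding N_def by auto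
    define p where "p = (\<lambda>i\<in>{..<Suc k}. h i \<otimes> e x i)"
    have pH: "p \<in> H" unfolding p_def using H_mul[OF h(1) ex] .
    have "(\<lambda>i\<in>{..<Suc k}. p i \<otimes> (\<lambda>i\<in>{..<Suc k}. inv (h i)) i) = e (a \<otimes> x \<otimes> inv a)"
      unfolding p_def e_def by (rule restrict_ext) (use H_car[OF h(1)] h(2) xc in simp)
    moreover have "(\<lambda>i\<in>{..<Suc k}. p i \<otimes> (\<lambda>i\<in>{..<Suc k}. inv (h i)) i) \<in> H"
      using H_mul[OF pH H_inv[OF h(1)]] .
    ultimately show "a \<otimes> x \<otimes> inv a \<in> N" unfolding N_def using a xc by simp
  qed
  moreover have "N \<noteq> {\<one>}" using nt unfolding N_def by blast
  ultimately have DN: "D \<subseteq> N" by (rule minN)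
  have claim: "h \<in> H" if h: "h \<in> FP (Suc k)" and h0: "h0 \<in> H" "\<forall>i<k. h0 i = h i" for h h0
  proof -
    have hc: "h i \<in> carrier G" if "i \<le> k" for i using FP_car[OF h] that by simp
    have "ab_map G (h0 k) = ab_map G (h0 0)" using H_ab[OF h0(1)] by simp
    also have "\<dots> = ab_map G (h 0)" using h0(2) k1 by simp
    also have "\<dots> = ab_map G (h k)" using FP_ab[OF h] by simp
    finally have "inv (h0 k) \<otimes> h k \<in> D" using ab_eq_iff2 H_car[OF h0(1)] hc by simp
    then have dN: "e (inv (h0 k) \<otimes> h k) \<in> H" using DN unfolding N_def by blast
    have "h = (\<lambda>i\<in>{..<Suc k}. h0 i \<otimes> e (inv (h0 k) \<otimes> h k) i)"
    proof (rule extensionalityI[OF FP_ext[OF h]])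
      show "(\<lambda>i\<in>{..<Suc k}. h0 i \<otimes> e (inv (h0 k) \<otimes> h k) i) \<in> extensional {..<Suc k}" by simp
      fix i assume "i \<in> {..<Suc k}"
      then show "h i = (\<lambda>i\<in>{..<Suc k}. h0 i \<otimes> e (inv (h0 k) \<otimes> h k) i) i"
        using h0(2) H_car[OF h0(1)] hc by (auto simp: e_def)
    qed
    then show ?thesis using H_mul[OF h0(1) dN] by simp
  qed
  define f where "f = f'(k := w')"
  define \<phi> where "\<phi> = \<phi>'(k := (\<lambda>x. x))"
  have f1: "f \<in> {..<Suc k} \<rightarrow> {..<Suc w'}"
  proof
    fix i assume "i \<in> {..<Suc k}" then show "f i \<in> {..<Suc w'}" using f'lt[of i] by (cases "i = k") (auto simp: f_def)
  qed
  have f2: "f ` {..<Suc k} = {..<Suc w'}"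
  proof -
    have "f ` {..<Suc k} = insert (f k) (f ` {..<k})" by (simp add: lessThan_Suc)
    also have "f ` {..<k} = f' ` {..<k}" unfolding f_def by (rule image_cong) auto
    finally show ?thesis using f'2 by (simp add: f_def lessThan_Suc)
  qed
  have aut: "\<forall>i<Suc k. aut_over_ab G (\<phi> i)" unfolding \<phi>_def using aut' aut_id by (simp add: less_Suc_eq)
  have "H = (\<lambda>g. \<lambda>i\<in>{..<Suc k}. \<phi> i (g (f i))) ` FP (Suc w')"
  proof
    show "H \<subseteq> (\<lambda>g. \<lambda>i\<in>{..<Suc k}. \<phi> i (g (f i))) ` FP (Suc w')"
    proof
      fix h assume h: "h \<in> H"
      obtain g where g: "g \<in> FP w'" "\<forall>i<k. h i = \<phi>' i (g (f' i))" using IH_elem[OF h] by blast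
      define g2 where "g2 = (\<lambda>i\<in>{..<Suc w'}. if i = w' then h k else g i)"
      have g2FP: "g2 \<in> FP (Suc w')"
      proof (rule FP_I)
        show "g2 i \<in> carrier G" if "i < Suc w'" for i
          using that H_car[OF h] FP_car[OF g(1)] by (simp add: g2_def)
        show "g2 \<in> extensional {..<Suc w'}" by (simp add: g2_def)
        fix i j assume ij: "i < Suc w'" "j < Suc w'"
        have L: "ab_map G (g2 i) = ab_map G (h k)" if "i < Suc w'" for i
        proof (cases "i = w'")
          case True then show ?thesis by (simp add: g2_def)
        next
          case False then have "i < w'" using that by simp
          then show ?thesis using ab_link[OF h g(1) g(2)] False by (simp add: g2_def)
        qed
        show "ab_map G (g2 i) = ab_map G (g2 j)" using L[OF ij(1)] L[OF ij(2)] by simp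
      qed
      have "h = (\<lambda>i\<in>{..<Suc k}. \<phi> i (g2 (f i)))"
      proof (rule extensionalityI[OF H_ext[OF h]])
        show "(\<lambda>i\<in>{..<Suc k}. \<phi> i (g2 (f i))) \<in> extensional {..<Suc k}" by simp
        fix i assume i: "i \<in> {..<Suc k}"
        show "h i = (\<lambda>i\<in>{..<Suc k}. \<phi> i (g2 (f i))) i"
        proof (cases "i = k")
          case True then show ?thesis by (simp add: f_def \<phi>_def g2_def)
        next
          case False then have "i < k" using i by simp
          then show ?thesis using g(2) f'lt[OF \<open>i < k\<close>] False by (simp add: f_def \<phi>_def g2_def)
        qed
      qed
      then show "h \<in> (\<lambda>g. \<lambda>i\<in>{..<Suc k}. \<phi> i (g (f i))) ` FP (Suc w')" using g2FP by (rule image_eqI)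
    qed
  next
    show "(\<lambda>g. \<lambda>i\<in>{..<Suc k}. \<phi> i (g (f i))) ` FP (Suc w') \<subseteq> H"
    proof
      fix h assume "h \<in> (\<lambda>g. \<lambda>i\<in>{..<Suc k}. \<phi> i (g (f i))) ` FP (Suc w')"
      then obtain g2 where g2: "g2 \<in> FP (Suc w')" "h = (\<lambda>i\<in>{..<Suc k}. \<phi> i (g2 (f i)))" by (rule imageE)
      have hFP: "h \<in> FP (Suc k)" unfolding g2(2) by (rule Phi_FP[OF f1 aut g2(1)])
      define g where "g = restrict g2 {..<w'}"
      have gFP: "g \<in> FP w'"
      proof (rule FP_I)
        show "g i \<in> carrier G" if "i < w'" for i using FP_car[OF g2(1)] that by (simp add: g_def)
        show "g \<in> extensional {..<w'}" by (simp add: g_def)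
        show "ab_map G (g i) = ab_map G (g j)" if "i < w'" "j < w'" for i j
          using FP_ab[OF g2(1)] that by (simp add: g_def)
      qed
      obtain h0 where h0: "h0 \<in> H" "\<forall>i<k. h0 i = \<phi>' i (g (f' i))" using IH_elem2[OF gFP] by blast
      have "\<forall>i<k. h0 i = h i" using h0(2) f'lt by (simp add: g2(2) g_def f_def \<phi>_def)
      then show "h \<in> H" using claim[OF hFP h0(1)] by blast
    qed
  qed
  then show ?thesis using f1 f2 aut by (intro exI[of _ "Suc w'"] exI[of _ f] exI[of _ \<phi>] conjI)
qed

lemma stepB:
  assumes triv: "\<forall>x\<in>carrier G. e x \<in> H \<longrightarrow> x = \<one>"
  shows "\<exists>w f \<phi>. goal w f \<phi>"
proof -
  have uniq: "h1 = h2" if h1: "h1 \<in> H" and h2: "h2 \<in> H" and eq: "\<forall>i<k. h1 i = h2 i" for h1 h2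
  proof -
    have "(\<lambda>i\<in>{..<Suc k}. h1 i \<otimes> (\<lambda>i\<in>{..<Suc k}. inv (h2 i)) i) = e (h1 k \<otimes> inv (h2 k))"
      unfolding e_def by (rule restrict_ext) (use eq H_car[OF h2] in \<open>auto simp: less_Suc_eq\<close>)
    moreover have "(\<lambda>i\<in>{..<Suc k}. h1 i \<otimes> (\<lambda>i\<in>{..<Suc k}. inv (h2 i)) i) \<in> H"
      using H_mul[OF h1 H_inv[OF h2]] .
    ultimately have "h1 k \<otimes> inv (h2 k) = \<one>" using triv H_car[OF h1] H_car[OF h2] by simp
    then have kk: "h1 k = h2 k"
    proof -
      assume a: "h1 k \<otimes> inv (h2 k) = \<one>"
      have "h1 k = h1 k \<otimes> inv (h2 k) \<otimes> h2 k" using H_car[OF h1] H_car[OF h2] by (simp add: m_assoc)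
      then show ?thesis using a H_car[OF h2] by simp
    qed
    show ?thesis
    proof (rule extensionalityI[OF H_ext[OF h1] H_ext[OF h2]])
      fix i assume "i \<in> {..<Suc k}" then show "h1 i = h2 i" using eq kk by (cases "i = k") auto
    qed
  qed
  define lift where "lift g = (THE h. h \<in> H \<and> (\<forall>i<k. h i = \<phi>' i (g (f' i))))" for g
  have ex1: "\<exists>!h. h \<in> H \<and> (\<forall>i<k. h i = \<phi>' i (g (f' i)))" if g: "g \<in> FP w'" for g
  proof -
    obtain h where h: "h \<in> H" "\<forall>i<k. h i = \<phi>' i (g (f' i))" using IH_elem2[OF g] by blast
    show ?thesis
    proof (rule ex1I[of _ h])
      show "h \<in> H \<and> (\<forall>i<k. h i = \<phi>' i (g (f' i)))" using h by blast
      fix h' assume "h' \<in> H \<and> (\<forall>i<k. h' i = \<phi>' i (g (f' i)))"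
      then show "h' = h" using uniq[of h' h] h by auto
    qed
  qed
  have lift: "lift g \<in> H \<and> (\<forall>i<k. lift g i = \<phi>' i (g (f' i)))" if g: "g \<in> FP w'" for g
    unfolding lift_def by (rule theI'[OF ex1[OF g]])
  have lift_eq: "lift g = h" if g: "g \<in> FP w'" and h: "h \<in> H" "\<forall>i<k. h i = \<phi>' i (g (f' i))" for g h
    unfolding lift_def by (rule the1_equality[OF ex1[OF g]]) (use h in blast)
  define \<psi> where "\<psi> g = lift g k" for g
  have "\<exists>j<w'. \<exists>\<sigma>. aut_over_ab G \<sigma> \<and> (\<forall>g\<in>FP w'. \<psi> g = \<sigma> (g j))"
  proof (rule hom_factor)
    show "1 \<le> w'" using w'pos by simp
    show "\<psi> g \<in> carrier G" if "g \<in> FP w'" for g unfolding \<psi>_def using H_car lift[OF that] by blast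
    show "\<psi> (\<lambda>i\<in>{..<w'}. a i \<otimes> b i) = \<psi> a \<otimes> \<psi> b" if a: "a \<in> FP w'" and b: "b \<in> FP w'" for a b
    proof -
      define m where "m = (\<lambda>i\<in>{..<Suc k}. lift a i \<otimes> lift b i)"
      have mH: "m \<in> H" unfolding m_def using H_mul lift[OF a] lift[OF b] by blast
      have mc: "\<forall>i<k. m i = \<phi>' i ((\<lambda>i\<in>{..<w'}. a i \<otimes> b i) (f' i))"
      proof (intro allI impI)
        fix i assume i: "i < k"
        have "m i = \<phi>' i (a (f' i)) \<otimes> \<phi>' i (b (f' i))" using i lift[OF a] lift[OF b] by (simp add: m_def)
        also have "\<dots> = \<phi>' i (a (f' i) \<otimes> b (f' i))"
          using aut_mult[OF aut'i[OF i] FP_car[OF a f'lt[OF i]] FP_car[OF b f'lt[OF i]]] by simp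
        finally show "m i = \<phi>' i ((\<lambda>i\<in>{..<w'}. a i \<otimes> b i) (f' i))" using f'lt[OF i] by simp
      qed
      have "lift (\<lambda>i\<in>{..<w'}. a i \<otimes> b i) = m" using lift_eq[OF FP_mul[OF a b] mH mc] .
      then show ?thesis unfolding \<psi>_def m_def by simp
    qed
    show "carrier G \<subseteq> \<psi> ` FP w'"
    proof
      fix y assume y: "y \<in> carrier G"
      have "y \<in> (\<lambda>h. h k) ` H" using surjH y by simp
      then obtain h where h: "h \<in> H" "y = h k" by (rule imageE)
      obtain g where g: "g \<in> FP w'" "\<forall>i<k. h i = \<phi>' i (g (f' i))" using IH_elem[OF h(1)] by blast
      have "\<psi> g = y" unfolding \<psi>_def using lift_eq[OF g(1) h(1) g(2)] h(2) by simp
      then show "y \<in> \<psi> ` FP w'" using g(1) by (metis imageI)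
    qed
    show "ab_map G (\<psi> g) = ab_map G (g 0)" if g: "g \<in> FP w'" for g
      unfolding \<psi>_def using ab_link[of "lift g" g 0] lift[OF g] g w'pos by simp
  qed
  then obtain j \<sigma> where j: "j < w'" and \<sigma>: "aut_over_ab G \<sigma>" and fac: "\<forall>g\<in>FP w'. \<psi> g = \<sigma> (g j)" by blast
  define f where "f = f'(k := j)"
  define \<phi> where "\<phi> = \<phi>'(k := \<sigma>)"
  have f1: "f \<in> {..<Suc k} \<rightarrow> {..<w'}"
  proof
    fix i assume "i \<in> {..<Suc k}" then show "f i \<in> {..<w'}" using f'lt[of i] j by (cases "i = k") (auto simp: f_def)
  qed
  have f2: "f ` {..<Suc k} = {..<w'}"
  proof -
    have "f ` {..<Suc k} = insert (f k) (f ` {..<k})" by (simp add: lessThan_Suc)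
    also have "f ` {..<k} = f' ` {..<k}" unfolding f_def by (rule image_cong) auto
    finally show ?thesis using f'2 j by (auto simp: f_def)
  qed
  have aut: "\<forall>i<Suc k. aut_over_ab G (\<phi> i)" unfolding \<phi>_def using aut' \<sigma> by (simp add: less_Suc_eq)
  have Phi_eq: "lift g = (\<lambda>i\<in>{..<Suc k}. \<phi> i (g (f i)))" if g: "g \<in> FP w'" for g
  proof (rule extensionalityI[OF H_ext])
    show "lift g \<in> H" using lift[OF g] by blast
    show "(\<lambda>i\<in>{..<Suc k}. \<phi> i (g (f i))) \<in> extensional {..<Suc k}" by simp
    fix i assume i: "i \<in> {..<Suc k}"
    show "lift g i = (\<lambda>i\<in>{..<Suc k}. \<phi> i (g (f i))) i"
    proof (cases "i = k")
      case True then show ?thesis using fac g unfolding \<psi>_def by (simp add: f_def \<phi>_def)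
    next
      case False then have "i < k" using i by simp
      then show ?thesis using lift[OF g] False by (simp add: f_def \<phi>_def)
    qed
  qed
  have "H = (\<lambda>g. \<lambda>i\<in>{..<Suc k}. \<phi> i (g (f i))) ` FP w'"
  proof
    show "H \<subseteq> (\<lambda>g. \<lambda>i\<in>{..<Suc k}. \<phi> i (g (f i))) ` FP w'"
    proof
      fix h assume h: "h \<in> H"
      obtain g where g: "g \<in> FP w'" "\<forall>i<k. h i = \<phi>' i (g (f' i))" using IH_elem[OF h] by blast
      have "h = (\<lambda>i\<in>{..<Suc k}. \<phi> i (g (f i)))" using lift_eq[OF g(1) h g(2)] Phi_eq[OF g(1)] by simp
      then show "h \<in> (\<lambda>g. \<lambda>i\<in>{..<Suc k}. \<phi> i (g (f i))) ` FP w'" using g(1) by (rule image_eqI)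
    qed
  next
    show "(\<lambda>g. \<lambda>i\<in>{..<Suc k}. \<phi> i (g (f i))) ` FP w' \<subseteq> H"
    proof
      fix h assume "h \<in> (\<lambda>g. \<lambda>i\<in>{..<Suc k}. \<phi> i (g (f i))) ` FP w'"
      then obtain g where g: "g \<in> FP w'" "h = (\<lambda>i\<in>{..<Suc k}. \<phi> i (g (f i)))" by (rule imageE)
      then have "h = lift g" using Phi_eq[OF g(1)] by simp
      then show "h \<in> H" using lift[OF g(1)] by simp
    qed
  qed
  then show ?thesis using f1 f2 aut by (intro exI[of _ w'] exI[of _ f] exI[of _ \<phi>] conjI)
qed

lemma step: "\<exists>w f \<phi>. goal w f \<phi>"
proof (cases "\<exists>x\<in>carrier G. x \<noteq> \<one> \<and> e x \<in> H")
  case True then show ?thesis by (rule stepA)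
next
  case False then have "\<forall>x\<in>carrier G. e x \<in> H \<longrightarrow> x = \<one>" by blast
  then show ?thesis by (rule stepB)
qed
end


lemma main:
  "1 \<le> k \<Longrightarrow> sg k H \<Longrightarrow> \<forall>i<k. (\<lambda>h. h i) ` H = carrier G \<Longrightarrow>
   \<exists>w f \<phi>. f \<in> {..<k} \<rightarrow> {..<w} \<and> f ` {..<k} = {..<w} \<and> (\<forall>i<k. aut_over_ab G (\<phi> i))
     \<and> H = (\<lambda>g. \<lambda>i\<in>{..<k}. \<phi> i (g (f i))) ` FP w"
proof (induction k arbitrary: H)
  case 0 then show ?case by simp
next
  case (Suc k)
  show ?case
  proof (cases "k = 0")
    case True
    show ?thesis unfolding True by (rule base[OF Suc.prems(2)[unfolded True] Suc.prems(3)[unfolded True]])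
  next
    case False
    then have k1: "1 \<le> k" by simp
    have HF: "H \<subseteq> FP (Suc k)" and H_one: "(\<lambda>i\<in>{..<Suc k}. \<one>) \<in> H"
      and H_mul: "\<And>x y. x \<in> H \<Longrightarrow> y \<in> H \<Longrightarrow> (\<lambda>i\<in>{..<Suc k}. x i \<otimes> y i) \<in> H"
      and H_inv: "\<And>x. x \<in> H \<Longrightarrow> (\<lambda>i\<in>{..<Suc k}. inv (x i)) \<in> H"
      using Suc.prems(2) unfolding sg_def by blast+
    define H' where "H' = (\<lambda>h. restrict h {..<k}) ` H"
    have sgH': "sg k H'"
      unfolding sg_def
    proof (intro conjI ballI)
      show "H' \<subseteq> FP k"
      proof
        fix h' assume "h' \<in> H'"
        then obtain h where h: "h \<in> H" "h' = restrict h {..<k}" unfolding H'_def by (rule imageE)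
        have hF: "h \<in> FP (Suc k)" using h(1) HF by blast
        show "h' \<in> FP k"
        proof (rule FP_I)
          show "h' i \<in> carrier G" if "i < k" for i using FP_car[OF hF] that h(2) by simp
          show "h' \<in> extensional {..<k}" using h(2) by simp
          show "ab_map G (h' i) = ab_map G (h' j)" if "i < k" "j < k" for i j
            using FP_ab[OF hF] that h(2) by simp
        qed
      qed
      have "(\<lambda>i\<in>{..<k}. \<one>) = restrict (\<lambda>i\<in>{..<Suc k}. \<one>) {..<k}" by (rule restrict_ext) simp
      then show "(\<lambda>i\<in>{..<k}. \<one>) \<in> H'" unfolding H'_def using H_one by (rule image_eqI)
    next
      fix x y assume x: "x \<in> H'" and y: "y \<in> H'"
      obtain hx where hx: "hx \<in> H" "x = restrict hx {..<k}" using x unfolding H'_def by (rule imageE)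
      obtain hy where hy: "hy \<in> H" "y = restrict hy {..<k}" using y unfolding H'_def by (rule imageE)
      have "(\<lambda>i\<in>{..<k}. x i \<otimes> y i) = restrict (\<lambda>i\<in>{..<Suc k}. hx i \<otimes> hy i) {..<k}"
        using hx(2) hy(2) by (intro restrict_ext) simp
      then show "(\<lambda>i\<in>{..<k}. x i \<otimes> y i) \<in> H'" unfolding H'_def using H_mul[OF hx(1) hy(1)] by (rule image_eqI)
    next
      fix x assume "x \<in> H'"
      then obtain hx where h: "hx \<in> H" "x = restrict hx {..<k}" unfolding H'_def by (rule imageE)
      have "(\<lambda>i\<in>{..<k}. inv (x i)) = restrict (\<lambda>i\<in>{..<Suc k}. inv (hx i)) {..<k}"
        using h(2) by (intro restrict_ext) simp
      then show "(\<lambda>i\<in>{..<k}. inv (x i)) \<in> H'" unfolding H'_def using H_inv[OF h(1)] by (rule image_eqI)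
    qed
    have surjH': "\<forall>i<k. (\<lambda>h. h i) ` H' = carrier G"
    proof (intro allI impI)
      fix i assume i: "i < k"
      have "(\<lambda>h. h i) ` H' = (\<lambda>h. h i) ` H" unfolding H'_def image_image using i by simp
      then show "(\<lambda>h. h i) ` H' = carrier G" using Suc.prems(3) i by simp
    qed
    have ex: "\<exists>w f \<phi>. f \<in> {..<k} \<rightarrow> {..<w} \<and> f ` {..<k} = {..<w} \<and> (\<forall>i<k. aut_over_ab G (\<phi> i))
     \<and> H' = (\<lambda>g. \<lambda>i\<in>{..<k}. \<phi> i (g (f i))) ` FP w"
      using Suc.IH[OF k1 sgH' surjH'] .
    then show ?thesis
    proof (elim exE conjE)
      fix w' f' \<phi>' assume IH: "f' \<in> {..<k} \<rightarrow> {..<w'}" "f' ` {..<k} = {..<w'}"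
        "\<forall>i<k. aut_over_ab G (\<phi>' i)" "H' = (\<lambda>g. \<lambda>i\<in>{..<k}. \<phi>' i (g (f' i))) ` FP w'"
      show ?thesis
        by (rule step[OF k1 Suc.prems(2) Suc.prems(3) IH(1) IH(2) IH(3) IH(4)[unfolded H'_def]])
    qed
  qed
qed


lemma P_group: "group (product_group {..<m} (\<lambda>_. G))"
  using product_group[of "{..<m}" "\<lambda>_. G"] is_group by blast

lemma FP_PiE: "x \<in> FP m \<Longrightarrow> x \<in> (\<Pi>\<^sub>E i\<in>{..<m}. carrier G)"
  unfolding FP_def by blast

lemma FP_subgroup: "subgroup (FP m) (product_group {..<m} (\<lambda>_. G))"
proof (rule group.subgroupI[OF P_group])
  show "FP m \<subseteq> carrier (product_group {..<m} (\<lambda>_. G))" using FP_PiE by auto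
  show "FP m \<noteq> {}" using FP_one by blast
  fix a assume a: "a \<in> FP m"
  show "inv\<^bsub>product_group {..<m} (\<lambda>_. G)\<^esub> a \<in> FP m"
    using inv_product_group[OF FP_PiE[OF a]] FP_inv[OF a] is_group by simp
next
  fix a b assume "a \<in> FP m" "b \<in> FP m"
  then show "a \<otimes>\<^bsub>product_group {..<m} (\<lambda>_. G)\<^esub> b \<in> FP m" using FP_mul by simp
qed

lemma fp_eq: "fiber_power G m = (product_group {..<m} (\<lambda>_. G))\<lparr>carrier := FP m\<rparr>"
  unfolding fiber_power_def FP_def by simp

lemma fp_carrier: "carrier (fiber_power G m) = FP m" by (simp add: fp_eq)
lemma fp_mult: "x \<otimes>\<^bsub>fiber_power G m\<^esub> y = (\<lambda>i\<in>{..<m}. x i \<otimes> y i)" by (simp add: fp_eq)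
lemma fp_one: "\<one>\<^bsub>fiber_power G m\<^esub> = (\<lambda>i\<in>{..<m}. \<one>)" by (simp add: fp_eq)

lemma fp_group: "group (fiber_power G m)"
  unfolding fp_eq using group.subgroup_imp_group[OF P_group FP_subgroup] .

lemma fp_inv: "x \<in> FP m \<Longrightarrow> inv\<^bsub>fiber_power G m\<^esub> x = (\<lambda>i\<in>{..<m}. inv (x i))"
  unfolding fp_eq using group.m_inv_consistent[OF P_group FP_subgroup] inv_product_group[OF FP_PiE] is_group
  by simp

lemma sg_of: "subgroup H (fiber_power G k) \<Longrightarrow> sg k H"
proof -
  assume H: "subgroup H (fiber_power G k)"
  have HF: "H \<subseteq> FP k" using subgroup.subset[OF H] fp_carrier by simp
  show ?thesis unfolding sg_def
  proof (intro conjI ballI)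
    show "H \<subseteq> FP k" by (rule HF)
    show "(\<lambda>i\<in>{..<k}. \<one>) \<in> H" using subgroup.one_closed[OF H] fp_one by simp
  next
    fix x y assume "x \<in> H" "y \<in> H"
    then show "(\<lambda>i\<in>{..<k}. x i \<otimes> y i) \<in> H" using subgroup.m_closed[OF H] fp_mult by metis
  next
    fix x assume x: "x \<in> H"
    then show "(\<lambda>i\<in>{..<k}. inv (x i)) \<in> H" using subgroup.m_inv_closed[OF H x] fp_inv HF by auto
  qed
qed

end

lemma pseudo_psg:
  fixes G :: "('a, 'b) monoid_scheme" (structure)
  assumes ps: "pseudosimple G"
  shows "psg G"
proof -
  have grp: "group G" and fin: "finite (carrier G)" using ps unfolding pseudosimple_def by blast+
  interpret group G by (rule grp)
  obtain S :: "'a monoid" and n :: nat where S: "n \<ge> 1" "simple_group S" "\<not> comm_group S"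
    "G\<lparr>carrier := derived G (carrier G)\<rparr> \<cong> product_group {..<n} (\<lambda>_. S)"
    using ps unfolding pseudosimple_def by blast
  have mod: "\<And>N. N \<lhd> G \<and> N \<noteq> {\<one>} \<longrightarrow> comm_group (G Mod N)"
    using ps unfolding pseudosimple_def by blast
  interpret S: group S using S(2) simple_group.axioms(1) by blast
  obtain s t where st: "s \<in> carrier S" "t \<in> carrier S" "s \<otimes>\<^bsub>S\<^esub> t \<noteq> t \<otimes>\<^bsub>S\<^esub> s"
    using S(3) S.group_comm_groupI by blast
  obtain \<Phi> where \<Phi>: "\<Phi> \<in> iso (G\<lparr>carrier := derived G (carrier G)\<rparr>) (product_group {..<n} (\<lambda>_. S))"
    using S(4) unfolding is_iso_def by blast
  define a where "a = (\<lambda>i\<in>{..<n}. if i = 0 then s else \<one>\<^bsub>S\<^esub>)"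
  define b where "b = (\<lambda>i\<in>{..<n}. if i = 0 then t else \<one>\<^bsub>S\<^esub>)"
  have aP: "a \<in> carrier (product_group {..<n} (\<lambda>_. S))" using st by (auto simp: a_def)
  have bP: "b \<in> carrier (product_group {..<n} (\<lambda>_. S))" using st by (auto simp: b_def)
  have bij: "\<Phi> ` derived G (carrier G) = carrier (product_group {..<n} (\<lambda>_. S))"
    using \<Phi> unfolding iso_iff by simp
  obtain x where x: "x \<in> derived G (carrier G)" "\<Phi> x = a" using aP bij by (metis imageE)
  obtain y where y: "y \<in> derived G (carrier G)" "\<Phi> y = b" using bP bij by (metis imageE)
  have hom: "\<Phi> \<in> hom (G\<lparr>carrier := derived G (carrier G)\<rparr>) (product_group {..<n} (\<lambda>_. S))"
    using \<Phi> by (simp add: iso_iff)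
  have "\<Phi> (x \<otimes> y) = a \<otimes>\<^bsub>product_group {..<n} (\<lambda>_. S)\<^esub> b"
    using hom_mult[OF hom, of x y] x y by simp
  moreover have "\<Phi> (y \<otimes> x) = b \<otimes>\<^bsub>product_group {..<n} (\<lambda>_. S)\<^esub> a"
    using hom_mult[OF hom, of y x] x y by simp
  moreover have "a \<otimes>\<^bsub>product_group {..<n} (\<lambda>_. S)\<^esub> b \<noteq> b \<otimes>\<^bsub>product_group {..<n} (\<lambda>_. S)\<^esub> a"
  proof
    assume "a \<otimes>\<^bsub>product_group {..<n} (\<lambda>_. S)\<^esub> b = b \<otimes>\<^bsub>product_group {..<n} (\<lambda>_. S)\<^esub> a"
    then have "(a \<otimes>\<^bsub>product_group {..<n} (\<lambda>_. S)\<^esub> b) 0 = (b \<otimes>\<^bsub>product_group {..<n} (\<lambda>_. S)\<^esub> a) 0" by simp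
    then show False using st S(1) by (simp add: a_def b_def)
  qed
  ultimately have nonab: "x \<otimes> y \<noteq> y \<otimes> x" by metis
  show ?thesis
  proof (unfold_locales)
    show "finite (carrier G)" by (rule fin)
    show "\<exists>a\<in>derived G (carrier G). \<exists>b\<in>derived G (carrier G). a \<otimes> b \<noteq> b \<otimes> a" using x y nonab by blast
    fix N assume "N \<lhd> G" "N \<noteq> {\<one>}"
    then show "derived G (carrier G) \<subseteq> N" using derived_minimal mod by blast
  qed
qed


lemma (in psg) final:
  assumes k1: "k \<ge> 1" and Hs: "subgroup H (fiber_power G k)" and surj: "\<forall>i<k. (\<lambda>h. h i) ` H = carrier G"
  shows "\<exists>w \<le> k.
     (\<exists>\<iota>. \<iota> \<in> iso ((fiber_power G k)\<lparr>carrier := H\<rparr>) (fiber_power G w) \<and>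
          (\<forall>h \<in> H. fp_ab G (\<iota> h) = fp_ab G h)) \<and>
     (\<exists>(f :: nat \<Rightarrow> nat) (\<phi> :: nat \<Rightarrow> 'a \<Rightarrow> 'a).
          f \<in> {..<k} \<rightarrow> {..<w} \<and> f ` {..<k} = {..<w} \<and>
          (\<forall>i<k. aut_over_ab G (\<phi> i)) \<and>
          H = (\<lambda>g. \<lambda>i\<in>{..<k}. \<phi> i (g (f i))) ` carrier (fiber_power G w))"
proof -
  have ex: "\<exists>w f \<phi>. f \<in> {..<k} \<rightarrow> {..<w} \<and> f ` {..<k} = {..<w} \<and> (\<forall>i<k. aut_over_ab G (\<phi> i))
     \<and> H = (\<lambda>g. \<lambda>i\<in>{..<k}. \<phi> i (g (f i))) ` FP w"
    using main[OF k1 sg_of[OF Hs] surj] .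
  then show ?thesis
  proof (elim exE conjE)
    fix w f \<phi> assume f1: "f \<in> {..<k} \<rightarrow> {..<w}" and f2: "f ` {..<k} = {..<w}"
      and aut: "\<forall>i<k. aut_over_ab G (\<phi> i)" and Heq: "H = (\<lambda>g. \<lambda>i\<in>{..<k}. \<phi> i (g (f i))) ` FP w"
    have wk: "w \<le> k" using card_image_le[of "{..<k}" f] f2 by simp
    have fi: "f i < w" if "i < k" for i using f1 that by auto
    define \<Phi> where "\<Phi> g = (\<lambda>i\<in>{..<k}. \<phi> i (g (f i)))" for g
    have Heq': "H = \<Phi> ` FP w" unfolding \<Phi>_def by (rule Heq)
    have hom: "\<Phi> \<in> hom (fiber_power G w) ((fiber_power G k)\<lparr>carrier := H\<rparr>)"
    proof (rule homI)
      fix g assume "g \<in> carrier (fiber_power G w)"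
      then show "\<Phi> g \<in> carrier ((fiber_power G k)\<lparr>carrier := H\<rparr>)" using Heq' fp_carrier by simp
    next
      fix g h assume g: "g \<in> carrier (fiber_power G w)" and h: "h \<in> carrier (fiber_power G w)"
      have gF: "g \<in> FP w" and hF: "h \<in> FP w" using g h fp_carrier by auto
      have "\<Phi> (\<lambda>i\<in>{..<w}. g i \<otimes> h i) = (\<lambda>i\<in>{..<k}. \<Phi> g i \<otimes> \<Phi> h i)"
        unfolding \<Phi>_def
      proof (rule restrict_ext)
        fix i assume i: "i \<in> {..<k}"
        then have "i < k" by simp
        then show "\<phi> i ((\<lambda>i\<in>{..<w}. g i \<otimes> h i) (f i)) =
          (\<lambda>i\<in>{..<k}. \<phi> i (g (f i))) i \<otimes> (\<lambda>i\<in>{..<k}. \<phi> i (h (f i))) i"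
          using aut_mult[OF aut[rule_format, OF \<open>i<k\<close>] FP_car[OF gF fi[OF \<open>i<k\<close>]] FP_car[OF hF fi[OF \<open>i<k\<close>]]]
            fi[OF \<open>i<k\<close>] by simp
      qed
      then show "\<Phi> (g \<otimes>\<^bsub>fiber_power G w\<^esub> h) = \<Phi> g \<otimes>\<^bsub>(fiber_power G k)\<lparr>carrier := H\<rparr>\<^esub> \<Phi> h"
        by (simp add: fp_mult)
    qed
    have inj: "inj_on \<Phi> (FP w)"
    proof
      fix g h assume gF: "g \<in> FP w" and hF: "h \<in> FP w" and eq: "\<Phi> g = \<Phi> h"
      show "g = h"
      proof (rule extensionalityI[OF FP_ext[OF gF] FP_ext[OF hF]])
        fix j assume "j \<in> {..<w}"
        then obtain i where i: "i < k" "j = f i" using f2 by (metis imageE lessThan_iff)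
        have "\<phi> i (g j) = \<phi> i (h j)" using fun_cong[OF eq, of i] i unfolding \<Phi>_def by simp
        moreover have "inj_on (\<phi> i) (carrier G)" using aut[rule_format, OF i(1)]
          unfolding aut_over_ab_def iso_iff by blast
        ultimately show "g j = h j" using FP_car[OF gF] FP_car[OF hF] fi[OF i(1)] i(2)
          by (metis inj_on_def)
      qed
    qed
    have iso: "\<Phi> \<in> iso (fiber_power G w) ((fiber_power G k)\<lparr>carrier := H\<rparr>)"
      unfolding iso_iff using hom inj Heq' fp_carrier by simp
    define \<iota> where "\<iota> = inv_into (carrier (fiber_power G w)) \<Phi>"
    have iso2: "\<iota> \<in> iso ((fiber_power G k)\<lparr>carrier := H\<rparr>) (fiber_power G w)"
      unfolding \<iota>_def using group.iso_set_sym[OF fp_group iso] .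
    have abc: "fp_ab G (\<iota> h) = fp_ab G h" if h: "h \<in> H" for h
    proof -
      have hi: "h \<in> \<Phi> ` FP w" using h Heq' by simp
      have iF: "\<iota> h \<in> FP w" unfolding \<iota>_def fp_carrier using inv_into_into[OF hi] .
      have hback: "\<Phi> (\<iota> h) = h" unfolding \<iota>_def fp_carrier using f_inv_into_f[OF hi] .
      have k0: "0 < k" using k1 by simp
      have w0: "0 < w" using fi[OF k0] by simp
      have "fp_ab G h = ab_map G (\<phi> 0 (\<iota> h (f 0)))"
        unfolding fp_ab_def using fun_cong[OF hback, of 0] k0 unfolding \<Phi>_def by simp
      also have "\<dots> = ab_map G (\<iota> h (f 0))" using aut_ab[OF aut[rule_format, OF k0] FP_car[OF iF fi[OF k0]]] .
      also have "\<dots> = ab_map G (\<iota> h 0)" using FP_ab[OF iF fi[OF k0] w0] .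
      finally show ?thesis unfolding fp_ab_def by simp
    qed
    show ?thesis
      using wk iso2 abc f1 f2 aut Heq fp_carrier
      by (intro exI[of _ w] conjI exI[of _ \<iota>] exI[of _ f] exI[of _ \<phi>] ballI) auto
  qed
qed

theorem lemma6p1:
  fixes G :: "('a, 'b) monoid_scheme" and k :: nat and H :: "(nat \<Rightarrow> 'a) set"
  assumes "pseudosimple G"
    and "k \<ge> 1"
    and "subgroup H (fiber_power G k)"
    and "\<forall>i<k. (\<lambda>h. h i) ` H = carrier G"
  shows "\<exists>w \<le> k.
     (\<exists>\<iota>. \<iota> \<in> iso ((fiber_power G k)\<lparr>carrier := H\<rparr>) (fiber_power G w) \<and>
          (\<forall>h \<in> H. fp_ab G (\<iota> h) = fp_ab G h)) \<and>
     (\<exists>(f :: nat \<Rightarrow> nat) (\<phi> :: nat \<Rightarrow> 'a \<Rightarrow> 'a).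
          f \<in> {..<k} \<rightarrow> {..<w} \<and> f ` {..<k} = {..<w} \<and>
          (\<forall>i<k. aut_over_ab G (\<phi> i)) \<and>
          H = (\<lambda>g. \<lambda>i\<in>{..<k}. \<phi> i (g (f i))) ` carrier (fiber_power G w))"
  using psg.final[OF pseudo_psg[OF assms(1)] assms(2-4)] .

end
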